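(* Consider the looped drop-and-shuffle Markov chain described in the context, with parameters $r\ge1$ and $p_d\in(1-\frac{1}{\sqrt r},1)$. (1) Let $s$ be a recursive sub-tree root with prefix $\rho$ and let $\tau=(\tau_1,\ldots,\tau_l)\in\{1,\ldots,r\}^l$, $l\ge0$. Then $$\Pr[H_s^{A_{\rho\tau}}>H_s^{\mathrm{Pop}(s)}]=1-(1-p_d)^{2l+1};$$ in particular, this probability depends only on $l$ and not on the values $\tau_i$ or on $\rho$. (2) Let $s$ be a recursive sub-tree root with prefix $\rho$ and let $\tau$ be any finite sequence over $\{1,\ldots,r\}$. Then $m_s(A_{\rho\tau}\cup\{\mathrm{Pop}(s)\})=m_\varepsilon(A_\tau\cup\{\bot\})$.
   Context: Fix an integer $r\ge1$ and a drop probability $p_d\in[0,1]$. Let $S_{\mathrm{Sel}}=\{[\,],\ [H|T],\ [\,][H|T],\ [H|T][\,]\}$ (four formal symbols) and let $S_{\mathrm{Com}}$ be the set of nonempty tuples $(y_1,\ldots,y_l)$, $1\le l\le r$, of pairwise distinct elements of $\{1,\ldots,r\}$. Pairs in $S_{\mathrm{Sel}}\times S_{\mathrm{Com}}$ are written $\langle x,y\rangle$. Let $W=(S_{\mathrm{Sel}}\times S_{\mathrm{Com}})^*$ be the set of finite words of such pairs, including the empty word $\varepsilon$. The state space is $W\cup\{w\cdot x: w\in W,\ x\in S_{\mathrm{Sel}}\}\cup\{\bot\}$, the initial state is $\varepsilon$. Define $\mathrm{Pop}$ recursively by $\mathrm{Pop}(\varepsilon)=\bot$, $\mathrm{Pop}(w\cdot[\,][H|T])=w\cdot[H|T]$,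 $\mathrm{Pop}(w\cdot[H|T][\,])=w\cdot[\,]$, $\mathrm{Pop}(w\cdot[\,])=\mathrm{Pop}(w)$, $\mathrm{Pop}(w\cdot[H|T])=\mathrm{Pop}(w)$, $\mathrm{Pop}(w\cdot\langle x,(y_1)\rangle)=\mathrm{Pop}(w\cdot x)$, and $\mathrm{Pop}(w\cdot\langle x,(y_1,y_2,\ldots,y_l)\rangle)=w\cdot\langle x,(y_2,\ldots,y_l)\rangle$ for $l\ge2$. Transition probabilities, for $w\in W$ (unlisted ones are $0$): from $w$, go to $w\cdot[H|T][\,]$ and to $w\cdot[\,][H|T]$ each with probability $(1-p_d)^2/2$, to $w\cdot[\,]$ and to $w\cdot[H|T]$ each with probability $p_d(1-p_d)$, and to $\mathrm{Pop}(w)$ with probability $p_d^2$; from $w\cdot x$ with $x\in\{[H|T],[H|T][\,]\}$, go to $w\cdot\langle x,(y_1,\ldots,y_l)\rangle$ with probability $p_d^{r-l}(1-p_d)^l/l!$ for each $(y_1,\ldots,y_l)\in S_{\mathrm{Com}}$, and to $\mathrm{Pop}(w\cdot x)$ with probability $p_d^r$; from $w\cdot x$ with $x\in\{[\,],[\,][H|T]\}$, go to $\mathrm{Pop}(w\cdot x)$ with probability $1$; and (looping) $p(\bot,\varepsilon)=1$. A recursive sub-tree root is a state $s=\langle x_1,y_1\rangle\cdots\langle x_m,y_m\rangle\in W$ with $m\ge1$, where $y_j=(y_{j,1},\ldots,y_{j,n_j})$; its prefix is the sequence $(y_{1,1},\ldots,y_{m,1})$. A state $w\cdot x$ with $w=\langle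 x_1,y_1\rangle\cdots\langle x_m,y_m\rangle\in W$ ($m\ge0$) and $x\in\{[\,],[\,][H|T]\}$ outputs the sequence $(y_{1,1},\ldots,y_{m,1})$; for a finite sequence $\sigma$ over $\{1,\ldots,r\}$, $A_\sigma$ is the set of states outputting $\sigma$, and $\rho\tau$ denotes concatenation. For a non-empty set $B$ of states and a state $z$, $H_z^B=\inf\{n\ge0:X_n\in B\}$ for the chain started at $X_0=z$ ($H_z^b:=H_z^{\{b\}}$), and $m_z(B)=\mathbb{E}[H_z^B]$. *)

theory Defs
  imports "HOL-Probability.Probability_Mass_Function"
begin

text \<open>The four formal selector symbols: [], [H|T], [][H|T], [H|T][].\<close>
datatype sel = SNil | SCons | SNilCons | SConsNil

text \<open>Words in W are represented REVERSED: the head of the list is the LAST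
  letter of the word. So the list (x,y) # w represents the word w . <x,y>.\<close>
type_synonym word = "(sel \<times> nat list) list"

datatype state = W word | WX word sel | Bot

definition com_set :: "nat \<Rightarrow> nat list set" where
  "com_set r = {ys. ys \<noteq> [] \<and> distinct ys \<and> set ys \<subseteq> {1..r}}"

definition valid_word :: "nat \<Rightarrow> word \<Rightarrow> bool" where
  "valid_word r w \<longleftrightarrow> (\<forall>(x,y)\<in>set w. y \<in> com_set r)"

text \<open>Pop (the last two equations only cover junk arguments outside the state space).\<close>
function pop :: "state \<Rightarrow> state" where
  "pop (W []) = Bot"
| "pop (WX w SNilCons) = WX w SCons"
| "pop (WX w SConsNil) = WX w SNil"
| "pop (WX w SNil) = pop (W w)"
| "pop (WX w SCons) = pop (W w)"
| "pop (W ((x, [y]) # w)) = pop (WX w x)"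
| "pop (W ((x, y1 # y2 # ys) # w)) = W ((x, y2 # ys) # w)"
| "pop (W ((x, []) # w)) = Bot"
| "pop Bot = Bot"
  by pat_completeness auto
termination
  by (relation "Wellfounded.measure (\<lambda>s. case s of W w \<Rightarrow> 2 * length w
                                  | WX w x \<Rightarrow> 2 * length w + 1 | Bot \<Rightarrow> 0)") auto

fun trans_prob :: "nat \<Rightarrow> real \<Rightarrow> state \<Rightarrow> state \<Rightarrow> real" where
  "trans_prob r pd (W w) z' =
     (if z' = WX w SConsNil then (1 - pd)^2 / 2 else 0)
   + (if z' = WX w SNilCons then (1 - pd)^2 / 2 else 0)
   + (if z' = WX w SNil then pd * (1 - pd) else 0)
   + (if z' = WX w SCons then pd * (1 - pd) else 0)
   + (if z' = pop (W w) then pd^2 else 0)"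
| "trans_prob r pd (WX w x) z' =
     (if x \<in> {SCons, SConsNil} then
        (\<Sum>ys\<in>com_set r. if z' = W ((x, ys) # w)
              then pd ^ (r - length ys) * (1 - pd) ^ length ys / fact (length ys) else 0)
        + (if z' = pop (WX w x) then pd ^ r else 0)
      else (if z' = pop (WX w x) then 1 else 0))"
| "trans_prob r pd Bot z' = (if z' = W [] then 1 else 0)"

definition kernel :: "nat \<Rightarrow> real \<Rightarrow> state \<Rightarrow> state pmf" where
  "kernel r pd z = embed_pmf (trans_prob r pd z)"

primrec traj :: "nat \<Rightarrow> real \<Rightarrow> nat \<Rightarrow> state \<Rightarrow> state list pmf" where
  "traj r pd 0 z = return_pmf [z]"
| "traj r pd (Suc n) z =
     bind_pmf (kernel r pd z) (\<lambda>z'. map_pmf (\<lambda>p. z # p) (traj r pd n z'))"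

definition first_hit_at :: "state set \<Rightarrow> state list \<Rightarrow> nat \<Rightarrow> bool" where
  "first_hit_at B p k \<longleftrightarrow> k < length p \<and> p ! k \<in> B \<and> (\<forall>j<k. p ! j \<notin> B)"

definition hit_time_prob :: "nat \<Rightarrow> real \<Rightarrow> state \<Rightarrow> state set \<Rightarrow> nat \<Rightarrow> real" where
  "hit_time_prob r pd z B k = measure_pmf.prob (traj r pd k z) {p. first_hit_at B p k}"

text \<open>m_z(B) = E[H_z^B] in [0,\<infinity>]:
  sum over k of k * Pr[H = k], plus \<infinity> * Pr[H = \<infinity>].\<close>
definition exp_hit :: "nat \<Rightarrow> real \<Rightarrow> state \<Rightarrow> state set \<Rightarrow> ennreal" where
  "exp_hit r pd z B =
     (\<Sum>k. of_nat k * ennreal (hit_time_prob r pd z B k))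
     + \<infinity> * ennreal (1 - (\<Sum>k. hit_time_prob r pd z B k))"

text \<open>Pr[H_z^A > H_z^b] = sum over k of Pr[H_z^b = k and H_z^A > k].\<close>
definition hit_before_prob :: "nat \<Rightarrow> real \<Rightarrow> state \<Rightarrow> state set \<Rightarrow> state \<Rightarrow> real" where
  "hit_before_prob r pd z A b =
     (\<Sum>k. measure_pmf.prob (traj r pd k z)
            {p. first_hit_at {b} p k \<and> (\<forall>j\<le>k. p ! j \<notin> A)})"

definition out_seq :: "word \<Rightarrow> nat list" where
  "out_seq w = map (\<lambda>(x, y). hd y) (rev w)"

definition subtree_root :: "nat \<Rightarrow> state \<Rightarrow> bool" where
  "subtree_root r s \<longleftrightarrow> (\<exists>w. s = W w \<and> w \<noteq> [] \<and> valid_word r w)"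

definition root_prefix :: "state \<Rightarrow> nat list" where
  "root_prefix s = (case s of W w \<Rightarrow> out_seq w | _ \<Rightarrow> [])"

definition outA :: "nat \<Rightarrow> nat list \<Rightarrow> state set" where
  "outA r \<sigma> = {WX w x | w x. valid_word r w \<and> x \<in> {SNil, SNilCons} \<and> out_seq w = \<sigma>}"

end

theory Submission
  imports Defs "HOL-Combinatorics.Multiset_Permutations"
begin

definition qq :: "nat \<Rightarrow> real \<Rightarrow> nat list \<Rightarrow> real" where
  "qq r pd ys = pd ^ (r - length ys) * (1 - pd) ^ length ys / fact (length ys)"

definition succ :: "nat \<Rightarrow> state \<Rightarrow> state set" where
  "succ r z = (case z of W w \<Rightarrow> {WX w SConsNil, WX w SNilCons, WX w SNil, WX w SCons, pop (W w)}
     | WX w x \<Rightarrow> (\<lambda>ys. W ((x,ys)#w)) ` com_set r \<union> {pop (WX w x)}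
     | Bot \<Rightarrow> {W []})"

definition PP :: "nat \<Rightarrow> real \<Rightarrow> state \<Rightarrow> (state \<Rightarrow> real) \<Rightarrow> real" where
  "PP r pd z g = (\<Sum>z'\<in>succ r z. trans_prob r pd z z' * g z')"

definition Pf :: "nat \<Rightarrow> real \<Rightarrow> state \<Rightarrow> (state \<Rightarrow> real) \<Rightarrow> real" where
  "Pf r pd z g = (case z of
      W w \<Rightarrow> (1-pd)^2/2 * g (WX w SConsNil) + (1-pd)^2/2 * g (WX w SNilCons)
            + pd*(1-pd) * g (WX w SNil) + pd*(1-pd) * g (WX w SCons) + pd^2 * g (pop (W w))
    | WX w x \<Rightarrow> (if x \<in> {SCons, SConsNil}
           then (\<Sum>ys\<in>com_set r. qq r pd ys * g (W ((x,ys)#w))) + pd^r * g (pop (WX w x))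
           else g (pop (WX w x)))
    | Bot \<Rightarrow> g (W []))"

lemma finite_com_set: "finite (com_set r)"
proof -
  have "com_set r \<subseteq> {xs. set xs \<subseteq> {1..r} \<and> distinct xs}" by (auto simp: com_set_def)
  thus ?thesis using finite_subset_distinct[of "{1..r}"] finite_subset by blast
qed

lemma finite_succ: "finite (succ r z)"
  by (cases z) (auto simp: succ_def finite_com_set)

lemma sum_ifmul: "finite A \<Longrightarrow> a \<in> A \<Longrightarrow> (\<Sum>z\<in>A. (if z = a then c else 0) * g z) = c * (g a :: real)"
  by (simp add: if_distrib[of "\<lambda>x. x * g _"] sum.delta cong: if_cong)

lemma PP_eq_Pf: "PP r pd z g = Pf r pd z g"
proof (cases z)
  case (W w)
  let ?A = "succ r (W w)"
  have fin: "finite ?A" by (rule finite_succ)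
  have m: "WX w SConsNil \<in> ?A" "WX w SNilCons \<in> ?A" "WX w SNil \<in> ?A" "WX w SCons \<in> ?A" "pop (W w) \<in> ?A"
    using W by (auto simp: succ_def)
  show ?thesis unfolding W
    apply (simp only: PP_def Pf_def trans_prob.simps state.case distrib_right sum.distrib)
    apply (simp only: sum_ifmul[OF fin m(1)] sum_ifmul[OF fin m(2)] sum_ifmul[OF fin m(3)]
       sum_ifmul[OF fin m(4)] sum_ifmul[OF fin m(5)])
    done
next
  case (WX w x)
  let ?A = "succ r (WX w x)"
  have fin: "finite ?A" by (rule finite_succ)
  have m: "\<And>ys. ys \<in> com_set r \<Longrightarrow> W ((x,ys)#w) \<in> ?A" "pop (WX w x) \<in> ?A"
    by (auto simp: succ_def)
  show ?thesis
  proof (cases "x \<in> {SCons, SConsNil}")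
    case True
    have "PP r pd (WX w x) g = (\<Sum>z'\<in>?A. (\<Sum>ys\<in>com_set r. (if z' = W ((x, ys) # w) then qq r pd ys else 0) * g z'))
       + (\<Sum>z'\<in>?A. (if z' = pop (WX w x) then pd ^ r else 0) * g z')"
      using True unfolding PP_def trans_prob.simps qq_def if_P[OF True]
      by (simp only: distrib_right sum.distrib sum_distrib_right)
    also have "\<dots> = (\<Sum>ys\<in>com_set r. qq r pd ys * g (W ((x,ys)#w))) + pd^r * g (pop (WX w x))"
      apply (subst sum.swap)
      apply (simp only: sum_ifmul[OF fin m(2)])
      apply (rule arg_cong2[where f="(+)"], rule sum.cong, rule refl)
      apply (rule sum_ifmul[OF fin m(1)], assumption, rule refl)
      done
    finally show ?thesis using True WX by (simp add: Pf_def)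
  next
    case False
    then show ?thesis unfolding WX PP_def Pf_def trans_prob.simps if_not_P[OF False] state.case
      by (simp only: sum_ifmul[OF fin m(2)] if_False mult_1 mult_1_left)
  qed
next
  case Bot
  then show ?thesis by (simp add: PP_def Pf_def succ_def)
qed

lemma trans_prob_zero:
  assumes "z' \<notin> succ r z" shows "trans_prob r pd z z' = 0"
proof (cases z)
  case (W w)
  have "z' \<noteq> WX w SConsNil" "z' \<noteq> WX w SNilCons" "z' \<noteq> WX w SNil" "z' \<noteq> WX w SCons" "z' \<noteq> pop (W w)"
    using assms W by (simp_all add: succ_def)
  thus ?thesis using W by (simp only: trans_prob.simps if_False add_0)
next
  case (WX w x)
  have a: "\<And>ys. ys \<in> com_set r \<Longrightarrow> z' \<noteq> W((x,ys)#w)" and b: "z' \<noteq> pop (WX w x)"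
    using assms WX by (auto simp: succ_def)
  have "(\<Sum>ys\<in>com_set r. if z' = W ((x, ys) # w) then pd ^ (r - length ys) * (1 - pd) ^ length ys / fact (length ys) else 0) = 0"
    by (rule sum.neutral) (simp add: a)
  thus ?thesis using WX b by (simp only: trans_prob.simps if_False add_0_right) simp
next
  case Bot
  thus ?thesis using assms by (simp add: succ_def)
qed

lemma trans_prob_nonneg:
  assumes "0 \<le> pd" "pd \<le> 1" shows "0 \<le> trans_prob r pd z z'"
proof (cases z)
  case (W w)
  have "0 \<le> (1-pd)^2/2" "0 \<le> pd * (1-pd)" "0 \<le> pd^2" using assms by auto
  thus ?thesis using W by (simp only: trans_prob.simps) (intro add_nonneg_nonneg; simp)
next
  case (WX w x)
  have "0 \<le> (\<Sum>ys\<in>com_set r. if z' = W ((x, ys) # w) then pd ^ (r - length ys) * (1 - pd) ^ length ys / fact (length ys) else 0)"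
    using assms by (intro sum_nonneg) auto
  moreover have "0 \<le> pd ^ r" using assms by simp
  ultimately show ?thesis unfolding WX trans_prob.simps by (smt (verit))
next
  case Bot
  thus ?thesis by simp
qed


lemma img_com_set: "set ` com_set r = Pow {1..r} - {{}}"
proof
  show "set ` com_set r \<subseteq> Pow {1..r} - {{}}" by (auto simp: com_set_def)
next
  show "Pow {1..r} - {{}} \<subseteq> set ` com_set r"
  proof
    fix S assume S: "S \<in> Pow {1..r} - {{}}"
    hence "finite S" using finite_subset by auto
    then obtain xs where xs: "set xs = S" "distinct xs" using finite_distinct_list by blast
    hence "xs \<in> com_set r" using S by (auto simp: com_set_def)
    thus "S \<in> set ` com_set r" using xs by blast
  qed
qed

lemma sum_com_set:
  "(\<Sum>ys\<in>com_set r. qq r pd ys * h (set ys))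
     = (\<Sum>S\<in>Pow {1..r} - {{}}. pd^(r - card S) * (1-pd)^card S * h S)"
proof -
  have "(\<Sum>ys\<in>com_set r. qq r pd ys * h (set ys))
     = (\<Sum>S\<in>set ` com_set r. \<Sum>ys\<in>{ys. ys \<in> com_set r \<and> set ys = S}. qq r pd ys * h (set ys))"
    by (rule sum.image_gen[OF finite_com_set])
  also have "\<dots> = (\<Sum>S\<in>Pow {1..r} - {{}}. pd^(r - card S) * (1-pd)^card S * h S)"
    unfolding img_com_set
  proof (rule sum.cong[OF refl])
    fix S assume S: "S \<in> Pow {1..r} - {{}}"
    hence fin: "finite S" using finite_subset by auto
    have e: "{ys. ys \<in> com_set r \<and> set ys = S} = permutations_of_set S"
      using S by (auto simp: com_set_def permutations_of_set_def)
    have "(\<Sum>ys\<in>{ys. ys \<in> com_set r \<and> set ys = S}. qq r pd ys * h (set ys))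
       = (\<Sum>ys\<in>permutations_of_set S. pd^(r - card S) * (1-pd)^card S / fact (card S) * h S)"
      unfolding e
      by (rule sum.cong[OF refl]) (auto simp: qq_def permutations_of_set_def distinct_card[symmetric])
    also have "\<dots> = pd^(r - card S) * (1-pd)^card S * h S"
      using fin by simp
    finally show "(\<Sum>ys\<in>{ys. ys \<in> com_set r \<and> set ys = S}. qq r pd ys * h (set ys))
       = pd^(r - card S) * (1-pd)^card S * h S" .
  qed
  finally show ?thesis .
qed

definition wt :: "nat \<Rightarrow> real \<Rightarrow> nat set \<Rightarrow> real" where
  "wt r pd S = pd^(r - card S) * (1-pd)^card S"

lemma sum_com_set_full:
  "(\<Sum>ys\<in>com_set r. qq r pd ys * h (set ys)) + pd^r * h {}
     = (\<Sum>S\<in>Pow {1..r}. wt r pd S * h S)"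
proof -
  have "(\<Sum>S\<in>Pow {1..r}. wt r pd S * h S) = wt r pd {} * h {} + (\<Sum>S\<in>Pow {1..r} - {{}}. wt r pd S * h S)"
    by (rule sum.remove) auto
  thus ?thesis by (simp add: sum_com_set wt_def)
qed

lemma wt_sum: "(\<Sum>S\<in>Pow {1..r}. wt r pd S) = 1"
proof -
  have "(\<Prod>x\<in>{1..r}. (1-pd) + pd) = (\<Sum>X\<in>Pow {1..r}. (\<Prod>x\<in>X. 1-pd) * (\<Prod>x\<in>{1..r}-X. pd))"
    by (rule prod_add) simp
  also have "\<dots> = (\<Sum>S\<in>Pow {1..r}. wt r pd S)"
  proof (rule sum.cong[OF refl])
    fix X assume "X \<in> Pow {1..r}"
    hence "X \<subseteq> {1..r}" "finite X" using finite_subset by auto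
    hence "card ({1..r} - X) = r - card X" by (simp add: card_Diff_subset)
    thus "(\<Prod>x\<in>X. 1-pd) * (\<Prod>x\<in>{1..r}-X. pd) = wt r pd X" by (simp add: wt_def)
  qed
  finally show ?thesis by simp
qed

lemma wt_sum_notin:
  assumes t: "t \<in> {1..r}"
  shows "(\<Sum>S\<in>Pow {1..r}. if t \<in> S then 0 else wt r pd S) = pd"
proof -
  let ?f = "\<lambda>x. if x = t then 0 else 1 - pd"
  have "(\<Prod>x\<in>{1..r}. ?f x + pd) = (\<Sum>X\<in>Pow {1..r}. (\<Prod>x\<in>X. ?f x) * (\<Prod>x\<in>{1..r}-X. pd))"
    by (rule prod_add) simp
  also have "\<dots> = (\<Sum>S\<in>Pow {1..r}. if t \<in> S then 0 else wt r pd S)"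
  proof (rule sum.cong[OF refl])
    fix X assume "X \<in> Pow {1..r}"
    hence X: "X \<subseteq> {1..r}" "finite X" using finite_subset by auto
    hence c: "card ({1..r} - X) = r - card X" by (simp add: card_Diff_subset)
    show "(\<Prod>x\<in>X. ?f x) * (\<Prod>x\<in>{1..r}-X. pd) = (if t \<in> X then 0 else wt r pd X)"
    proof (cases "t \<in> X")
      case True
      hence "(\<Prod>x\<in>X. ?f x) = 0" using X True by (subst prod_zero_iff) auto
      then show ?thesis using True by simp
    next
      case False
      hence "(\<Prod>x\<in>X. ?f x) = (\<Prod>x\<in>X. 1 - pd)" by (intro prod.cong) auto
      then show ?thesis using False c by (simp add: wt_def)
    qed
  qed
  also have "(\<Prod>x\<in>{1..r}. ?f x + pd) = (\<Prod>x\<in>{1..r}. if x = t then pd else 1)"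
    by (intro prod.cong) auto
  also have "\<dots> = pd" using t by (simp add: prod.delta)
  finally show ?thesis by simp
qed

lemma S1: "(\<Sum>ys\<in>com_set r. qq r pd ys) + pd^r = 1"
  using sum_com_set_full[of r pd "\<lambda>_. 1"] wt_sum[of r pd] by simp

lemma wt_sum_in:
  assumes t: "t \<in> {1..r}"
  shows "(\<Sum>S\<in>Pow {1..r}. if t \<in> S then wt r pd S else 0) = 1 - pd"
proof -
  have "(\<Sum>S\<in>Pow {1..r}. if t \<in> S then wt r pd S else 0) + (\<Sum>S\<in>Pow {1..r}. if t \<in> S then 0 else wt r pd S)
     = (\<Sum>S\<in>Pow {1..r}. wt r pd S)"
    by (subst sum.distrib[symmetric]) (rule sum.cong, auto)
  thus ?thesis using wt_sum[of r pd] wt_sum_notin[OF t, of pd] by simp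
qed

lemma S2: "(\<Sum>ys\<in>com_set r. qq r pd ys * real (length ys)) = real r * (1 - pd)"
proof -
  have "(\<Sum>ys\<in>com_set r. qq r pd ys * real (length ys)) = (\<Sum>ys\<in>com_set r. qq r pd ys * real (card (set ys)))"
    by (rule sum.cong) (auto simp: com_set_def distinct_card)
  also have "\<dots> = (\<Sum>S\<in>Pow {1..r}. wt r pd S * real (card S))"
    using sum_com_set_full[of r pd "\<lambda>S. real (card S)"] by simp
  also have "\<dots> = (\<Sum>S\<in>Pow {1..r}. \<Sum>t\<in>{1..r}. if t \<in> S then wt r pd S else 0)"
  proof (rule sum.cong[OF refl])
    fix S assume "S \<in> Pow {1..r}"
    hence "S \<subseteq> {1..r}" by auto
    hence "(\<Sum>t\<in>{1..r}. if t \<in> S then wt r pd S else 0) = (\<Sum>t\<in>S. wt r pd S)"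
    proof -
      assume Ss: "S \<subseteq> {1..r}"
      have e: "{t \<in> {1..r}. t \<in> S} = S" using Ss by auto
      have "(\<Sum>t\<in>{1..r}. if t \<in> S then wt r pd S else 0) = (\<Sum>t\<in>{t \<in> {1..r}. t \<in> S}. wt r pd S)"
        by (rule sum.inter_filter[symmetric]) simp
      thus ?thesis unfolding e .
    qed
    thus "wt r pd S * real (card S) = (\<Sum>t\<in>{1..r}. if t \<in> S then wt r pd S else 0)" by simp
  qed
  also have "\<dots> = (\<Sum>t\<in>{1..r}. \<Sum>S\<in>Pow {1..r}. if t \<in> S then wt r pd S else 0)"
    by (rule sum.swap)
  also have "\<dots> = (\<Sum>t\<in>{1..r}. 1 - pd)"
    by (rule sum.cong[OF refl]) (rule wt_sum_in)
  finally show ?thesis by simp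
qed

lemma S3:
  assumes t: "t \<in> {1..r}"
  shows "(\<Sum>ys\<in>com_set r. qq r pd ys * (if t \<in> set ys then c else 1)) + pd^r = 1 - (1 - c) * (1 - pd)"
proof -
  have "(\<Sum>ys\<in>com_set r. qq r pd ys * (if t \<in> set ys then c else 1)) + pd^r
     = (\<Sum>S\<in>Pow {1..r}. wt r pd S * (if t \<in> S then c else 1))"
    using sum_com_set_full[of r pd "\<lambda>S. if t \<in> S then c else 1"] by simp
  also have "\<dots> = (\<Sum>S\<in>Pow {1..r}. wt r pd S) - (1 - c) * (\<Sum>S\<in>Pow {1..r}. if t \<in> S then wt r pd S else 0)"
    by (simp add: sum_distrib_left sum_subtractf[symmetric] algebra_simps if_distrib cong: if_cong)
  finally show ?thesis using wt_sum[of r pd] wt_sum_in[OF t, of pd] by simp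
qed


context
  fixes r :: nat and pd :: real
  assumes pd0: "0 \<le> pd" and pd1: "pd \<le> 1"
begin

lemma Pf_const: "Pf r pd z (\<lambda>_. c) = c"
proof (cases z)
  case (W w)
  have "(1 - pd)\<^sup>2 / 2 * c + (1 - pd)\<^sup>2 / 2 * c + pd * (1 - pd) * c + pd * (1 - pd) * c + pd\<^sup>2 * c = c"
    by (simp add: power2_eq_square algebra_simps)
  thus ?thesis using W by (simp add: Pf_def)
next
  case (WX w x)
  have "(\<Sum>ys\<in>com_set r. qq r pd ys * c) + pd^r * c = c"
  proof -
    have "(\<Sum>ys\<in>com_set r. qq r pd ys * c) + pd^r * c = ((\<Sum>ys\<in>com_set r. qq r pd ys) + pd^r) * c"
      by (simp add: sum_distrib_right distrib_right)
    thus ?thesis using S1[of r pd] by simp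
  qed
  thus ?thesis using WX by (simp add: Pf_def)
qed (simp add: Pf_def)

lemma PP_const: "PP r pd z (\<lambda>_. c) = c"
  by (simp add: PP_eq_Pf Pf_const)

lemma PP_cong: "(\<And>z'. z' \<in> succ r z \<Longrightarrow> g z' = h z') \<Longrightarrow> PP r pd z g = PP r pd z h"
  unfolding PP_def by (rule sum.cong) auto

lemma PP_add: "PP r pd z (\<lambda>z'. g z' + h z') = PP r pd z g + PP r pd z h"
  unfolding PP_def by (simp add: distrib_left sum.distrib)

lemma PP_sum: "PP r pd z (\<lambda>z'. \<Sum>i\<in>I. g i z') = (\<Sum>i\<in>I. PP r pd z (g i))"
  unfolding PP_def by (simp add: sum_distrib_left sum.swap[of _ I])

lemma PP_cmult: "PP r pd z (\<lambda>z'. c * g z') = c * PP r pd z g"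
  unfolding PP_def by (simp add: sum_distrib_left algebra_simps)

lemma PP_mono: "(\<And>z'. z' \<in> succ r z \<Longrightarrow> g z' \<le> h z') \<Longrightarrow> PP r pd z g \<le> PP r pd z h"
  unfolding PP_def by (rule sum_mono) (auto intro!: mult_left_mono trans_prob_nonneg pd0 pd1)

lemma PP_nonneg: "(\<And>z'. z' \<in> succ r z \<Longrightarrow> 0 \<le> g z') \<Longrightarrow> 0 \<le> PP r pd z g"
  using PP_mono[of z "\<lambda>_. 0" g] PP_const[of z 0] by simp

lemma PP_abs: "\<bar>PP r pd z g\<bar> \<le> PP r pd z (\<lambda>z'. \<bar>g z'\<bar>)"
  unfolding PP_def
  by (rule order.trans[OF sum_abs]) (simp add: abs_mult trans_prob_nonneg pd0 pd1)

lemma trans_sum: "(\<Sum>z'\<in>succ r z. trans_prob r pd z z') = 1"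
  using PP_const[of z 1] by (simp add: PP_def)

lemma kernel_pmf: "pmf (kernel r pd z) z' = trans_prob r pd z z'"
  unfolding kernel_def
proof (rule pmf_embed_pmf)
  show "\<And>x. 0 \<le> trans_prob r pd z x" by (rule trans_prob_nonneg[OF pd0 pd1])
  have "(\<integral>\<^sup>+ x. ennreal (trans_prob r pd z x) \<partial>count_space UNIV) = (\<Sum>x\<in>succ r z. ennreal (trans_prob r pd z x))"
    by (rule nn_integral_count_space') (auto simp: finite_succ trans_prob_zero)
  also have "\<dots> = ennreal (\<Sum>x\<in>succ r z. trans_prob r pd z x)"
    by (rule sum_ennreal) (rule trans_prob_nonneg[OF pd0 pd1])
  finally show "(\<integral>\<^sup>+ x. ennreal (trans_prob r pd z x) \<partial>count_space UNIV) = 1"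
    by (simp add: trans_sum)
qed

lemma set_pmf_kernel: "z' \<in> set_pmf (kernel r pd z) \<Longrightarrow> z' \<in> succ r z"
  using trans_prob_zero[of z' r z pd] by (auto simp: set_pmf_iff kernel_pmf)

lemma prob_traj_Suc:
  "measure_pmf.prob (traj r pd (Suc k) z) X
     = PP r pd z (\<lambda>z'. measure_pmf.prob (traj r pd k z') {p. z # p \<in> X})"
proof -
  let ?K = "kernel r pd z"
  let ?F = "\<lambda>z'. map_pmf (\<lambda>p. z # p) (traj r pd k z')"
  have "ennreal (measure_pmf.prob (traj r pd (Suc k) z) X) = emeasure (measure_pmf (bind_pmf ?K ?F)) X"
    by (simp add: measure_pmf.emeasure_eq_measure)
  also have "\<dots> = (\<integral>\<^sup>+x. emeasure (measure_pmf (?F x)) X \<partial>measure_pmf ?K)"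
    by (rule emeasure_bind_pmf)
  also have "\<dots> = (\<Sum>x\<in>succ r z. emeasure (measure_pmf (?F x)) X * pmf ?K x)"
    by (rule nn_integral_measure_pmf_support) (auto simp: finite_succ dest: set_pmf_kernel)
  also have "\<dots> = (\<Sum>x\<in>succ r z. ennreal (trans_prob r pd z x * measure_pmf.prob (traj r pd k x) {p. z # p \<in> X}))"
    by (rule sum.cong[OF refl])
       (simp add: measure_pmf.emeasure_eq_measure kernel_pmf vimage_def ennreal_mult'' trans_prob_nonneg pd0 pd1 mult.commute)
  also have "\<dots> = ennreal (PP r pd z (\<lambda>z'. measure_pmf.prob (traj r pd k z') {p. z # p \<in> X}))"
    unfolding PP_def
    by (rule sum_ennreal) (simp add: trans_prob_nonneg pd0 pd1)
  finally show ?thesis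
    by (subst (asm) ennreal_inj) (auto intro!: PP_nonneg)
qed

end


primrec Gen :: "nat \<Rightarrow> real \<Rightarrow> state set \<Rightarrow> (state \<Rightarrow> real) \<Rightarrow> nat \<Rightarrow> state \<Rightarrow> real" where
  "Gen r pd B g0 0 z = g0 z"
| "Gen r pd B g0 (Suc k) z = (if z \<in> B then 0 else PP r pd z (Gen r pd B g0 k))"

lemma first_hit_Cons: "first_hit_at B (z # p) (Suc k) \<longleftrightarrow> z \<notin> B \<and> first_hit_at B p k"
proof -
  have "(\<forall>j<Suc k. (z # p) ! j \<notin> B) \<longleftrightarrow> z \<notin> B \<and> (\<forall>j<k. p ! j \<notin> B)"
    by (auto simp: less_Suc_eq_0_disj)
  thus ?thesis unfolding first_hit_at_def by auto
qed

lemma all_le_Suc: "(\<forall>j\<le>Suc k. P j) \<longleftrightarrow> P 0 \<and> (\<forall>j\<le>k. P (Suc j))"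
  apply (rule iffI)
   apply simp
  apply clarify
  apply (case_tac j)
   apply auto
  done

context
  fixes r :: nat and pd :: real
  assumes pd0: "0 \<le> pd" and pd1: "pd \<le> 1"
begin

lemma PP_zero: "PP r pd z (\<lambda>_. 0) = 0"
  using PP_const[OF pd0 pd1] by blast

lemma hit_time_Gen:
  "hit_time_prob r pd z B k = Gen r pd B (\<lambda>z. if z \<in> B then 1 else 0) k z"
proof (induction k arbitrary: z)
  case 0
  then show ?case by (simp add: hit_time_prob_def first_hit_at_def indicator_def)
next
  case (Suc k)
  have e: "{p. z # p \<in> {p. first_hit_at B p (Suc k)}} = (if z \<in> B then {} else {p. first_hit_at B p k})"
    by (auto simp: first_hit_Cons)
  show ?case
    unfolding hit_time_prob_def prob_traj_Suc[OF pd0 pd1] e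
    using Suc.IH by (simp add: PP_zero hit_time_prob_def)
qed

lemma hit_before_Gen:
  "measure_pmf.prob (traj r pd k z) {p. first_hit_at {b} p k \<and> (\<forall>j\<le>k. p ! j \<notin> A)}
     = Gen r pd (A \<union> {b}) (\<lambda>z. if z = b \<and> z \<notin> A then 1 else 0) k z"
proof (induction k arbitrary: z)
  case 0
  then show ?case by (auto simp: first_hit_at_def indicator_def)
next
  case (Suc k)
  have e: "{p. z # p \<in> {p. first_hit_at {b} p (Suc k) \<and> (\<forall>j\<le>Suc k. p ! j \<notin> A)}}
     = (if z \<in> A \<union> {b} then {} else {p. first_hit_at {b} p k \<and> (\<forall>j\<le>k. p ! j \<notin> A)})"
    by (auto simp: first_hit_Cons all_le_Suc)
  show ?case
    unfolding prob_traj_Suc[OF pd0 pd1] e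
    using Suc.IH by (simp add: PP_zero)
qed

lemma hit_before_Gen_sum:
  "hit_before_prob r pd z A b = (\<Sum>k. Gen r pd (A \<union> {b}) (\<lambda>z. if z = b \<and> z \<notin> A then 1 else 0) k z)"
  unfolding hit_before_prob_def hit_before_Gen ..

text \<open>Drift (Lyapunov) bound and vanishing of the survival probabilities.\<close>

definition Us :: "state set \<Rightarrow> nat \<Rightarrow> state \<Rightarrow> real" where
  "Us B = Gen r pd B (\<lambda>z. if z \<in> B then 0 else 1)"

lemma Us_nonneg: "0 \<le> Us B k z"
proof (induction k arbitrary: z)
  case 0 then show ?case by (simp add: Us_def)
next
  case (Suc k) then show ?case by (auto simp: Us_def intro!: PP_nonneg[OF pd0 pd1])
qed

lemma Us_le1: "Us B k z \<le> 1"
proof (induction k arbitrary: z)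
  case 0 then show ?case by (simp add: Us_def)
next
  case (Suc k)
  have "PP r pd z (Us B k) \<le> PP r pd z (\<lambda>_. 1)" by (rule PP_mono[OF pd0 pd1]) (use Suc in auto)
  then show ?case by (auto simp: Us_def PP_const[OF pd0 pd1])
qed

lemma lyap_bound:
  assumes V0: "\<And>z. 0 \<le> V z" and drift: "\<And>z. z \<notin> B \<Longrightarrow> PP r pd z V \<le> V z - 1"
  shows "(\<Sum>j<n. Us B j z) \<le> V z"
proof (induction n arbitrary: z)
  case 0 then show ?case by (simp add: V0)
next
  case (Suc n)
  have s: "(\<Sum>j<Suc n. Us B j z) = Us B 0 z + (\<Sum>j<n. Us B (Suc j) z)"
    by (rule sum.lessThan_Suc_shift)
  show ?case
  proof (cases "z \<in> B")
    case True
    then show ?thesis unfolding s by (simp add: Us_def V0)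
  next
    case False
    have "(\<Sum>j<n. Us B (Suc j) z) = (\<Sum>j<n. PP r pd z (Us B j))"
      using False by (simp add: Us_def)
    also have "\<dots> = PP r pd z (\<lambda>z'. \<Sum>j<n. Us B j z')"
      by (rule PP_sum[OF pd0 pd1, symmetric])
    also have "\<dots> \<le> PP r pd z V"
      by (rule PP_mono[OF pd0 pd1]) (rule Suc.IH)
    finally show ?thesis unfolding s using False drift[OF False] by (simp add: Us_def)
  qed
qed

lemma Us_tendsto:
  assumes V0: "\<And>z. 0 \<le> V z" and drift: "\<And>z. z \<notin> B \<Longrightarrow> PP r pd z V \<le> V z - 1"
  shows "(\<lambda>j. Us B j z) \<longlonglongrightarrow> 0"
proof -
  have "summable (\<lambda>j. Us B j z)"
  proof (rule bounded_imp_summable)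
    show "\<And>n. 0 \<le> Us B n z" by (rule Us_nonneg)
    fix n
    have "(\<Sum>k\<le>n. Us B k z) = (\<Sum>k<Suc n. Us B k z)" by (simp add: lessThan_Suc_atMost)
    also have "\<dots> \<le> V z" by (rule lyap_bound[OF V0 drift])
    finally show "(\<Sum>k\<le>n. Us B k z) \<le> V z" .
  qed
  thus ?thesis by (rule summable_LIMSEQ_zero)
qed

text \<open>Representation of bounded harmonic functions.\<close>

lemma harmonic_repr:
  assumes clos: "\<And>z z'. z \<in> S \<Longrightarrow> z' \<in> succ r z \<Longrightarrow> z' \<in> S"
    and fb: "\<And>z. \<bar>f z\<bar> \<le> 1"
    and harm: "\<And>z. z \<in> S \<Longrightarrow> z \<notin> B \<Longrightarrow> f z = PP r pd z f"
    and zS: "z \<in> S"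
    and U0: "(\<lambda>j. Us B j z) \<longlonglongrightarrow> 0"
  shows "(\<lambda>k. Gen r pd B (\<lambda>z. if z \<in> B then f z else 0) k z) sums f z"
proof -
  let ?g = "\<lambda>k. Gen r pd B (\<lambda>z. if z \<in> B then f z else 0) k"
  let ?R = "Gen r pd B (\<lambda>z. if z \<in> B then 0 else f z)"
  have rep: "z \<in> S \<Longrightarrow> f z = (\<Sum>k\<le>n. ?g k z) + ?R n z" for n z
  proof (induction n arbitrary: z)
    case 0 then show ?case by simp
  next
    case (Suc n)
    show ?case
    proof (cases "z \<in> B")
      case True
      have "(\<Sum>k\<le>Suc n. ?g k z) = ?g 0 z + (\<Sum>k\<le>n. ?g (Suc k) z)" by (rule sum.atMost_Suc_shift)
      then show ?thesis using True by simp
    next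
      case False
      have "f z = PP r pd z f" using harm[OF Suc.prems False] .
      also have "\<dots> = PP r pd z (\<lambda>z'. (\<Sum>k\<le>n. ?g k z') + ?R n z')"
        by (rule PP_cong[OF pd0 pd1]) (rule Suc.IH, rule clos[OF Suc.prems])
      also have "\<dots> = (\<Sum>k\<le>n. PP r pd z (?g k)) + PP r pd z (?R n)"
        by (simp add: PP_add[OF pd0 pd1] PP_sum[OF pd0 pd1])
      also have "\<dots> = (\<Sum>k\<le>Suc n. ?g k z) + ?R (Suc n) z"
      proof -
        have "(\<Sum>k\<le>Suc n. ?g k z) = ?g 0 z + (\<Sum>k\<le>n. ?g (Suc k) z)" by (rule sum.atMost_Suc_shift)
        thus ?thesis using False by simp
      qed
      finally show ?thesis .
    qed
  qed
  have Rb: "\<bar>?R n z\<bar> \<le> Us B n z" for n z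
  proof (induction n arbitrary: z)
    case 0 then show ?case using fb by (simp add: Us_def)
  next
    case (Suc n)
    show ?case
    proof (cases "z \<in> B")
      case True then show ?thesis by (simp add: Us_def)
    next
      case False
      have "\<bar>PP r pd z (?R n)\<bar> \<le> PP r pd z (\<lambda>z'. \<bar>?R n z'\<bar>)" by (rule PP_abs[OF pd0 pd1])
      also have "\<dots> \<le> PP r pd z (Us B n)" by (rule PP_mono[OF pd0 pd1]) (rule Suc.IH)
      finally show ?thesis using False by (simp add: Us_def)
    qed
  qed
  have "(\<lambda>n. ?R n z) \<longlonglongrightarrow> 0"
    by (rule Lim_null_comparison[OF _ U0]) (simp add: Rb)
  hence "(\<lambda>n. f z - ?R n z) \<longlonglongrightarrow> f z - 0" by (intro tendsto_intros)
  moreover have "(\<lambda>n. f z - ?R n z) = (\<lambda>n. \<Sum>k\<le>n. ?g k z)"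
    using rep[OF zS] by (intro ext) (metis add_diff_cancel_right')
  ultimately have "(\<lambda>n. \<Sum>k\<le>n. ?g k z) \<longlonglongrightarrow> f z" by simp
  thus ?thesis by (simp add: sums_def_le)
qed

end


definition vst :: "nat \<Rightarrow> state \<Rightarrow> bool" where
  "vst r z = (case z of W u \<Rightarrow> valid_word r u | WX u x \<Rightarrow> valid_word r u | Bot \<Rightarrow> True)"

lemma valid_word_Nil[simp]: "valid_word r []"
  by (simp add: valid_word_def)

lemma valid_word_Cons[simp]: "valid_word r ((x,ys)#w) \<longleftrightarrow> ys \<in> com_set r \<and> valid_word r w"
  by (auto simp: valid_word_def)

lemma valid_word_append[simp]: "valid_word r (u @ w) \<longleftrightarrow> valid_word r u \<and> valid_word r w"
  by (auto simp: valid_word_def)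

lemma vst_simps[simp]: "vst r (W u) = valid_word r u" "vst r (WX u x) = valid_word r u" "vst r Bot"
  by (simp_all add: vst_def)

lemma vst_pop: "vst r z \<Longrightarrow> vst r (pop z)"
  by (induction z rule: pop.induct) (auto simp: com_set_def)

lemma vst_succ: "vst r z \<Longrightarrow> z' \<in> succ r z \<Longrightarrow> vst r z'"
  by (cases z) (auto simp: succ_def intro: vst_pop[of r "W _", simplified] vst_pop[of r "WX _ _", simplified])

lemma out_seq_Nil[simp]: "out_seq [] = []"
  by (simp add: out_seq_def)

lemma out_seq_Cons[simp]: "out_seq ((x, y # ys) # w) = out_seq w @ [y]"
  by (simp add: out_seq_def)

lemma out_seq_append[simp]: "out_seq (u @ w) = out_seq w @ out_seq u"
  by (simp add: out_seq_def)

lemma length_out_seq[simp]: "length (out_seq w) = length w"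
  by (simp add: out_seq_def)

lemma outA_iff:
  "z \<in> outA r \<sigma> \<longleftrightarrow> (\<exists>u x. z = WX u x \<and> valid_word r u \<and> x \<in> {SNil, SNilCons} \<and> out_seq u = \<sigma>)"
  by (auto simp: outA_def)

lemma outA_WX[simp]: "WX u x \<in> outA r \<sigma> \<longleftrightarrow> valid_word r u \<and> x \<in> {SNil, SNilCons} \<and> out_seq u = \<sigma>"
  by (auto simp: outA_def)

lemma outA_W[simp]: "W u \<notin> outA r \<sigma>" and outA_Bot[simp]: "Bot \<notin> outA r \<sigma>"
  by (auto simp: outA_def)

definition wsz :: "word \<Rightarrow> nat" where
  "wsz w = sum_list (map (\<lambda>(x,ys). length ys + 1) w)"

fun mu :: "state \<Rightarrow> nat" where
  "mu (W w) = 3 * wsz w + 1"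
| "mu (WX w x) = 3 * wsz w + 1 + (if x \<in> {SNilCons, SConsNil} then 2 else 1)"
| "mu Bot = 0"

lemma mu_pop: "z \<noteq> Bot \<Longrightarrow> mu (pop z) < mu z"
  by (induction z rule: pop.induct) (auto simp: wsz_def split: if_splits)

lemma pop_len: "pop z = WX u x' \<Longrightarrow> (case z of W w \<Rightarrow> length u < length w | WX w _ \<Rightarrow> length u \<le> length w | Bot \<Rightarrow> True)"
  by (induction z arbitrary: u x' rule: pop.induct) fastforce+

definition shift :: "word \<Rightarrow> state \<Rightarrow> state" where
  "shift w z = (case z of W u \<Rightarrow> W (u @ w) | WX u x \<Rightarrow> WX (u @ w) x | Bot \<Rightarrow> pop (W w))"

lemma shift_simps[simp]: "shift w (W u) = W (u @ w)" "shift w (WX u x) = WX (u @ w) x" "shift w Bot = pop (W w)"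
  by (simp_all add: shift_def)

lemma pop_shift: "z \<noteq> Bot \<Longrightarrow> vst r z \<Longrightarrow> pop (shift w z) = shift w (pop z)"
  by (induction z rule: pop.induct) (auto simp: com_set_def)

lemma shift_ne_pop:
  assumes "z \<noteq> Bot" "w \<noteq> []" shows "shift w z \<noteq> pop (W w)"
proof -
  have a: "mu (pop (W w)) < mu (W w)" by (rule mu_pop) simp
  have "mu (W w) \<le> mu (shift w z)" using assms(1)
    by (cases z) (auto simp: wsz_def)
  thus ?thesis using a by auto
qed

lemma pop_notin_outA:
  assumes "valid_word r w" shows "pop (W w) \<notin> outA r (out_seq w @ \<tau>)"
proof
  assume "pop (W w) \<in> outA r (out_seq w @ \<tau>)"
  then obtain u x where u: "pop (W w) = WX u x" "out_seq u = out_seq w @ \<tau>" by (auto simp: outA_iff)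
  have "length u < length w" using pop_len[OF u(1)] by simp
  moreover have "length u \<ge> length w" using arg_cong[OF u(2), of length] by simp
  ultimately show False by simp
qed

context
  fixes r :: nat and pd :: real
  assumes pd0: "0 \<le> pd" and pd1: "pd \<le> 1"
begin

lemma Pf_shift:
  assumes "z \<noteq> Bot" "vst r z"
  shows "Pf r pd (shift w z) g = Pf r pd z (\<lambda>z'. g (shift w z'))"
proof (cases z)
  case (W u)
  have "pop (W (u @ w)) = shift w (pop (W u))" using pop_shift[OF assms] W by simp
  thus ?thesis using W by (simp add: Pf_def)
next
  case (WX u x)
  have "pop (WX (u @ w) x) = shift w (pop (WX u x))" using pop_shift[OF assms] WX by simp
  thus ?thesis using WX by (simp add: Pf_def)
qed (use assms in simp)

lemma Gen_shift:
  assumes BotB: "Bot \<in> B"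
    and Bset: "\<And>z. vst r z \<Longrightarrow> shift w z \<in> B' \<longleftrightarrow> z \<in> B"
    and g0: "\<And>z. vst r z \<Longrightarrow> g0' (shift w z) = g0 z"
    and z: "vst r z"
  shows "Gen r pd B' g0' k (shift w z) = Gen r pd B g0 k z"
  using z
proof (induction k arbitrary: z)
  case 0 then show ?case by (simp add: g0)
next
  case (Suc k)
  show ?case
  proof (cases "z \<in> B")
    case True then show ?thesis using Bset[OF Suc.prems] by simp
  next
    case False
    hence nb: "z \<noteq> Bot" using BotB by auto
    have "PP r pd (shift w z) (Gen r pd B' g0' k) = PP r pd z (\<lambda>z'. Gen r pd B' g0' k (shift w z'))"
      by (simp add: PP_eq_Pf Pf_shift[OF nb Suc.prems])
    also have "\<dots> = PP r pd z (Gen r pd B g0 k)"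
      by (rule PP_cong[OF pd0 pd1]) (rule Suc.IH, rule vst_succ[OF Suc.prems])
    finally show ?thesis using False Bset[OF Suc.prems] by simp
  qed
qed

lemma shift_targets:
  assumes w: "w \<noteq> []" "valid_word r w" and z: "vst r z"
  shows "shift w z \<in> outA r (out_seq w @ \<tau>) \<union> {pop (W w)} \<longleftrightarrow> z \<in> outA r \<tau> \<union> {Bot}"
proof (cases z)
  case (W u)
  then show ?thesis using shift_ne_pop[of z w] w by auto
next
  case (WX u x)
  then show ?thesis using shift_ne_pop[of z w] w z by auto
next
  case Bot
  then show ?thesis by simp
qed

lemma shift_g0:
  assumes w: "w \<noteq> []" "valid_word r w" and z: "vst r z"
  shows "(if shift w z = pop (W w) \<and> shift w z \<notin> outA r (out_seq w @ \<tau>) then 1 else 0)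
       = (if z = Bot \<and> z \<notin> outA r \<tau> then (1::real) else 0)"
  using shift_ne_pop[of z w] pop_notin_outA[OF w(2), of \<tau>] w by (cases "z = Bot") auto

end


function Vp :: "real \<Rightarrow> real \<Rightarrow> state \<Rightarrow> real" where
  "Vp E c (W []) = 0"
| "Vp E c (WX w SNilCons) = c + Vp E c (W w)"
| "Vp E c (WX w SConsNil) = 1 + Vp E c (W w)"
| "Vp E c (WX w SNil) = Vp E c (W w)"
| "Vp E c (WX w SCons) = Vp E c (W w)"
| "Vp E c (W ((x, [y]) # w)) = Vp E c (WX w x)"
| "Vp E c (W ((x, y1 # y2 # ys) # w)) = E + Vp E c (W ((x, y2 # ys) # w))"
| "Vp E c (W ((x, []) # w)) = 0"
| "Vp E c Bot = 0"
  by pat_completeness auto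
termination
  by (relation "Wellfounded.measure (\<lambda>(E, c, z). mu z)") (auto simp: wsz_def)

definition VV :: "real \<Rightarrow> real \<Rightarrow> state \<Rightarrow> real" where
  "VV E c z = (case z of Bot \<Rightarrow> 0 | W w \<Rightarrow> E + Vp E c (W w)
     | WX w x \<Rightarrow> (if x \<in> {SCons, SConsNil} then c else 1) + Vp E c (WX w x))"

lemma VV_pop: "VV E c (pop z) = Vp E c z"
  by (induction z rule: pop.induct) (auto simp: VV_def)

lemma VV_child: "ys \<noteq> [] \<Longrightarrow> VV E c (W ((x, ys) # w)) = real (length ys) * E + Vp E c (WX w x)"
proof (induction ys)
  case Nil then show ?case by simp
next
  case (Cons y ys)
  show ?case
  proof (cases ys)
    case Nil then show ?thesis by (simp add: VV_def)
  next
    case (Cons y2 ys2)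
    then show ?thesis using Cons.IH by (simp add: VV_def algebra_simps)
  qed
qed

lemma Vp_nonneg: "0 \<le> E \<Longrightarrow> 0 \<le> c \<Longrightarrow> 0 \<le> Vp E c z"
  by (induction E c z rule: Vp.induct) auto

lemma VV_nonneg: "0 \<le> E \<Longrightarrow> 0 \<le> c \<Longrightarrow> 0 \<le> VV E c z"
  by (cases z) (auto simp: VV_def intro!: add_nonneg_nonneg Vp_nonneg)

context
  fixes r :: nat and pd :: real
  assumes pd0: "0 \<le> pd" and pd1: "pd \<le> 1"
begin

lemma VV_drift:
  assumes Ec: "E = 1 + (1 - pd) * (c + 1)" "c = 1 + E * (real r * (1 - pd))"
    and z: "z \<noteq> Bot"
  shows "PP r pd z (VV E c) \<le> VV E c z - 1"
proof (cases z)
  case (W w)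
  have "Pf r pd (W w) (VV E c) = (1-pd)^2/2 * (c + 1 + Vp E c (W w)) + (1-pd)^2/2 * (1 + c + Vp E c (W w))
     + pd*(1-pd) * (1 + Vp E c (W w)) + pd*(1-pd) * (c + Vp E c (W w)) + pd^2 * Vp E c (W w)"
    by (simp add: Pf_def VV_pop) (simp add: VV_def, simp add: algebra_simps)
  also have "\<dots> = Vp E c (W w) + (1 - pd) * (c + 1)"
    by (simp add: power2_eq_square algebra_simps)
  finally have "PP r pd z (VV E c) = Vp E c (W w) + (1 - pd) * (c + 1)" using W by (simp add: PP_eq_Pf)
  moreover have "VV E c z = E + Vp E c (W w)" using W by (simp add: VV_def)
  ultimately show ?thesis using Ec(1) by linarith
next
  case (WX w x)
  show ?thesis
  proof (cases "x \<in> {SCons, SConsNil}")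
    case True
    have "(\<Sum>ys\<in>com_set r. qq r pd ys * VV E c (W ((x, ys) # w)))
        = (\<Sum>ys\<in>com_set r. E * (qq r pd ys * real (length ys)) + qq r pd ys * Vp E c (WX w x))"
      by (rule sum.cong[OF refl]) (auto simp: VV_child com_set_def algebra_simps)
    also have "\<dots> = E * (real r * (1 - pd)) + (\<Sum>ys\<in>com_set r. qq r pd ys) * Vp E c (WX w x)"
      by (simp add: sum.distrib sum_distrib_left[symmetric] sum_distrib_right S2)
    finally have "Pf r pd (WX w x) (VV E c) = E * (real r * (1 - pd)) + ((\<Sum>ys\<in>com_set r. qq r pd ys) + pd^r) * Vp E c (WX w x)"
      using True by (simp add: Pf_def VV_pop algebra_simps)
    also have "\<dots> = E * (real r * (1 - pd)) + Vp E c (WX w x)" by (simp add: S1)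
    finally have "PP r pd z (VV E c) = E * (real r * (1 - pd)) + Vp E c (WX w x)" using WX by (simp add: PP_eq_Pf)
    moreover have "VV E c z = c + Vp E c (WX w x)" using WX True by (simp add: VV_def)
    ultimately show ?thesis using Ec(2) by linarith
  next
    case False
    then show ?thesis using WX by (simp add: PP_eq_Pf Pf_def VV_pop) (simp add: VV_def)
  qed
qed (use z in simp)

end


definition isPre :: "nat list \<Rightarrow> nat list \<Rightarrow> bool" where
  "isPre \<tau> \<pi> \<longleftrightarrow> take (length \<pi>) \<tau> = \<pi>"

definition rr :: "real \<Rightarrow> nat \<Rightarrow> real" where
  "rr pd j = (1 - pd) ^ (2 * j + 1)"

definition locW :: "real \<Rightarrow> nat list \<Rightarrow> nat list \<Rightarrow> real" where
  "locW pd \<tau> \<pi> = (if isPre \<tau> \<pi> then 1 - rr pd (length \<tau> - length \<pi>) else 1)"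

definition locC :: "real \<Rightarrow> nat list \<Rightarrow> nat list \<Rightarrow> real" where
  "locC pd \<tau> \<pi> = (if isPre \<tau> \<pi> \<and> length \<pi> < length \<tau>
       then 1 - (1 - pd) * rr pd (length \<tau> - length \<pi> - 1) else 1)"

definition locN :: "nat list \<Rightarrow> nat list \<Rightarrow> real" where
  "locN \<tau> \<pi> = (if \<pi> = \<tau> then 0 else 1)"

function Mp :: "real \<Rightarrow> nat list \<Rightarrow> state \<Rightarrow> real" where
  "Mp pd \<tau> (W []) = 1"
| "Mp pd \<tau> (WX w SNilCons) = locC pd \<tau> (out_seq w) * Mp pd \<tau> (W w)"
| "Mp pd \<tau> (WX w SConsNil) = locN \<tau> (out_seq w) * Mp pd \<tau> (W w)"
| "Mp pd \<tau> (WX w SNil) = Mp pd \<tau> (W w)"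
| "Mp pd \<tau> (WX w SCons) = Mp pd \<tau> (W w)"
| "Mp pd \<tau> (W ((x, [y]) # w)) = Mp pd \<tau> (WX w x)"
| "Mp pd \<tau> (W ((x, y1 # y2 # ys) # w)) = locW pd \<tau> (out_seq w @ [y2]) * Mp pd \<tau> (W ((x, y2 # ys) # w))"
| "Mp pd \<tau> (W ((x, []) # w)) = 1"
| "Mp pd \<tau> Bot = 1"
  by pat_completeness auto
termination
  by (relation "Wellfounded.measure (\<lambda>(pd, \<tau>, z). mu z)") (auto simp: wsz_def)

definition locx :: "real \<Rightarrow> nat list \<Rightarrow> nat list \<Rightarrow> sel \<Rightarrow> real" where
  "locx pd \<tau> \<pi> x = (if x \<in> {SCons, SConsNil} then locC pd \<tau> \<pi> else locN \<tau> \<pi>)"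

definition MM :: "real \<Rightarrow> nat list \<Rightarrow> state \<Rightarrow> real" where
  "MM pd \<tau> z = (case z of Bot \<Rightarrow> 1 | W w \<Rightarrow> locW pd \<tau> (out_seq w) * Mp pd \<tau> (W w)
      | WX w x \<Rightarrow> locx pd \<tau> (out_seq w) x * Mp pd \<tau> (WX w x))"

lemma MM_pop: "MM pd \<tau> (pop z) = Mp pd \<tau> z"
  by (induction z rule: pop.induct) (auto simp: MM_def locx_def)

lemma MM_child: "ys \<noteq> [] \<Longrightarrow> MM pd \<tau> (W ((x, ys) # w)) = (\<Prod>y\<leftarrow>ys. locW pd \<tau> (out_seq w @ [y])) * Mp pd \<tau> (WX w x)"
proof (induction ys)
  case Nil then show ?case by simp
next
  case (Cons y ys)
  show ?case
  proof (cases ys)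
    case Nil then show ?thesis by (simp add: MM_def)
  next
    case (Cons y2 ys2)
    have "MM pd \<tau> (W ((x, y # ys) # w)) = locW pd \<tau> (out_seq w @ [y]) * MM pd \<tau> (W ((x, ys) # w))"
      using Cons by (simp add: MM_def)
    then show ?thesis using Cons.IH Cons by (simp add: mult.assoc)
  qed
qed

lemma prod_list_1: "(\<Prod>y\<leftarrow>ys. (1::real)) = 1"
  by (induction ys) auto

context
  fixes pd :: real
  assumes pd0: "0 \<le> pd" and pd1: "pd \<le> 1"
begin

lemma rr_bounds: "0 \<le> rr pd j" "rr pd j \<le> 1"
proof -
  show "0 \<le> rr pd j" unfolding rr_def using pd1 by simp
  show "rr pd j \<le> 1" unfolding rr_def by (rule power_le_one) (use pd0 pd1 in auto)
qed

lemma loc_bounds: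
  "0 \<le> locW pd \<tau> \<pi>" "locW pd \<tau> \<pi> \<le> 1" "0 \<le> locC pd \<tau> \<pi>" "locC pd \<tau> \<pi> \<le> 1"
  "0 \<le> locN \<tau> \<pi>" "locN \<tau> \<pi> \<le> 1" "0 \<le> locx pd \<tau> \<pi> x" "locx pd \<tau> \<pi> x \<le> 1"
proof -
  have a: "0 \<le> (1 - pd) * rr pd j" "(1 - pd) * rr pd j \<le> 1" for j
    using rr_bounds[of j] pd0 pd1 by (auto intro: mult_le_one)
  show "0 \<le> locW pd \<tau> \<pi>" "locW pd \<tau> \<pi> \<le> 1" using rr_bounds by (auto simp: locW_def)
  show c: "0 \<le> locC pd \<tau> \<pi>" "locC pd \<tau> \<pi> \<le> 1" using a by (auto simp: locC_def)
  show n: "0 \<le> locN \<tau> \<pi>" "locN \<tau> \<pi> \<le> 1" by (auto simp: locN_def)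
  show "0 \<le> locx pd \<tau> \<pi> x" "locx pd \<tau> \<pi> x \<le> 1" using c n by (auto simp: locx_def)
qed

lemma Mp_bounds_aux: "pd' = pd \<Longrightarrow> 0 \<le> Mp pd' \<tau> z \<and> Mp pd' \<tau> z \<le> 1"
  by (induction pd' \<tau> z rule: Mp.induct) (auto intro!: mult_nonneg_nonneg mult_le_one simp: loc_bounds)

lemma Mp_bounds: "0 \<le> Mp pd \<tau> z \<and> Mp pd \<tau> z \<le> 1"
  by (rule Mp_bounds_aux) (rule refl)

lemma MM_bounds: "0 \<le> MM pd \<tau> z" "MM pd \<tau> z \<le> 1"
  using Mp_bounds[of \<tau> z] loc_bounds
  by (auto simp: MM_def split: state.split intro!: mult_nonneg_nonneg mult_le_one)

lemma isPre_cases: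
  "\<pi> = \<tau> \<or> (isPre \<tau> \<pi> \<and> length \<pi> < length \<tau>) \<or> \<not> isPre \<tau> \<pi>"
proof -
  have "isPre \<tau> \<pi> \<Longrightarrow> \<not> length \<pi> < length \<tau> \<Longrightarrow> \<pi> = \<tau>"
    unfolding isPre_def by (metis not_less take_all)
  thus ?thesis by blast
qed

lemma loc_identity:
  "locW pd \<tau> \<pi> = (1-pd)^2 * locC pd \<tau> \<pi> * locN \<tau> \<pi> + pd*(1-pd) * (locN \<tau> \<pi> + locC pd \<tau> \<pi>) + pd^2"
proof -
  consider "\<pi> = \<tau>" | "isPre \<tau> \<pi> \<and> length \<pi> < length \<tau>" | "\<not> isPre \<tau> \<pi>"
    using isPre_cases by blast
  then show ?thesis
  proof cases
    case 1
    then show ?thesis by (simp add: locW_def locC_def locN_def isPre_def rr_def power2_eq_square algebra_simps)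
  next
    case 2
    then obtain j where j: "length \<tau> - length \<pi> = Suc j" by (metis Suc_diff_Suc)
    have ne: "\<pi> \<noteq> \<tau>" using 2 by auto
    have rrS: "rr pd (Suc j) = (1 - pd)^2 * rr pd j" by (simp add: rr_def power_add power2_eq_square algebra_simps)
    show ?thesis using 2 ne j
      by (simp add: locW_def locC_def locN_def rrS power2_eq_square algebra_simps)
  next
    case 3
    have "isPre \<tau> \<tau>" by (simp add: isPre_def)
    hence "\<pi> \<noteq> \<tau>" using 3 by auto
    then show ?thesis using 3 by (simp add: locW_def locC_def locN_def power2_eq_square algebra_simps)
  qed
qed

lemma locW_snoc:
  assumes "isPre \<tau> \<pi>" "length \<pi> < length \<tau>"
  shows "locW pd \<tau> (\<pi> @ [y]) = (if y = \<tau> ! length \<pi> then 1 - rr pd (length \<tau> - length \<pi> - 1) else 1)"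
proof -
  have "isPre \<tau> (\<pi> @ [y]) \<longleftrightarrow> y = \<tau> ! length \<pi>"
    using assms unfolding isPre_def by (auto simp: take_Suc_conv_app_nth)
  thus ?thesis by (simp add: locW_def)
qed

lemma locW_snoc_none:
  assumes "\<not> (isPre \<tau> \<pi> \<and> length \<pi> < length \<tau>)"
  shows "locW pd \<tau> (\<pi> @ [y]) = 1"
proof -
  have "\<not> isPre \<tau> (\<pi> @ [y])"
  proof
    assume h: "isPre \<tau> (\<pi> @ [y])"
    hence l: "length \<pi> < length \<tau>" unfolding isPre_def
      by (metis length_append_singleton length_take min.absorb_iff2 not_less_eq_eq less_eq_Suc_le min_def)
    have "take (length \<pi>) (take (Suc (length \<pi>)) \<tau>) = \<pi>" using h unfolding isPre_def by simp
    hence "isPre \<tau> \<pi>" unfolding isPre_def by (simp add: min_def)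
    thus False using assms l by blast
  qed
  thus ?thesis by (simp add: locW_def)
qed

lemma child_sum:
  assumes tau: "set \<tau> \<subseteq> {1..r}"
  shows "(\<Sum>ys\<in>com_set r. qq r pd ys * (\<Prod>y\<leftarrow>ys. locW pd \<tau> (\<pi> @ [y]))) + pd^r = locC pd \<tau> \<pi>"
proof (cases "isPre \<tau> \<pi> \<and> length \<pi> < length \<tau>")
  case True
  let ?t = "\<tau> ! length \<pi>"
  let ?c = "1 - rr pd (length \<tau> - length \<pi> - 1)"
  have "?t \<in> set \<tau>" using True by (simp add: nth_mem)
  hence t: "?t \<in> {1..r}" using tau by blast
  have "(\<Sum>ys\<in>com_set r. qq r pd ys * (\<Prod>y\<leftarrow>ys. locW pd \<tau> (\<pi> @ [y])))
      = (\<Sum>ys\<in>com_set r. qq r pd ys * (if ?t \<in> set ys then ?c else 1))"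
  proof (rule sum.cong[OF refl])
    fix ys assume "ys \<in> com_set r"
    hence d: "distinct ys" by (simp add: com_set_def)
    have "(\<Prod>y\<leftarrow>ys. locW pd \<tau> (\<pi> @ [y])) = (\<Prod>y\<in>set ys. locW pd \<tau> (\<pi> @ [y]))"
      using d by (simp add: prod.distinct_set_conv_list)
    also have "\<dots> = (\<Prod>y\<in>set ys. if y = ?t then ?c else 1)"
      using True by (intro prod.cong) (auto simp: locW_snoc)
    also have "\<dots> = (if ?t \<in> set ys then ?c else 1)"
      by (simp add: prod.delta')
    finally show "qq r pd ys * (\<Prod>y\<leftarrow>ys. locW pd \<tau> (\<pi> @ [y])) = qq r pd ys * (if ?t \<in> set ys then ?c else 1)"
      by simp
  qed
  hence "(\<Sum>ys\<in>com_set r. qq r pd ys * (\<Prod>y\<leftarrow>ys. locW pd \<tau> (\<pi> @ [y]))) + pd^r = 1 - (1 - ?c) * (1 - pd)"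
    using S3[OF t, of pd ?c] by simp
  thus ?thesis using True by (simp add: locC_def algebra_simps)
next
  case False
  have "(\<Sum>ys\<in>com_set r. qq r pd ys * (\<Prod>y\<leftarrow>ys. locW pd \<tau> (\<pi> @ [y]))) = (\<Sum>ys\<in>com_set r. qq r pd ys)"
    using False by (simp add: locW_snoc_none prod_list_1)
  moreover have "locC pd \<tau> \<pi> = 1" unfolding locC_def using False by (simp only: if_False)
  ultimately show ?thesis using S1[of r pd] by simp
qed

end


lemma MM_outA: "z \<in> outA r \<tau> \<Longrightarrow> MM pd \<tau> z = 0"
  by (auto simp: outA_iff MM_def locx_def locN_def)

lemma MM_root: "MM pd \<tau> (W []) = 1 - (1 - pd) ^ (2 * length \<tau> + 1)"
  by (simp add: MM_def locW_def isPre_def rr_def)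

context
  fixes r :: nat and pd :: real and \<tau> :: "nat list"
  assumes pd0: "0 \<le> pd" and pd1: "pd \<le> 1" and tau: "set \<tau> \<subseteq> {1..r}"
begin

lemma MM_harm:
  assumes z: "vst r z" "z \<notin> outA r \<tau> \<union> {Bot}"
  shows "MM pd \<tau> z = PP r pd z (MM pd \<tau>)"
proof (cases z)
  case (W u)
  let ?\<pi> = "out_seq u"
  have "Pf r pd (W u) (MM pd \<tau>) =
      (1-pd)^2/2 * (locC pd \<tau> ?\<pi> * (locN \<tau> ?\<pi> * Mp pd \<tau> (W u)))
    + (1-pd)^2/2 * (locN \<tau> ?\<pi> * (locC pd \<tau> ?\<pi> * Mp pd \<tau> (W u)))
    + pd*(1-pd) * (locN \<tau> ?\<pi> * Mp pd \<tau> (W u)) + pd*(1-pd) * (locC pd \<tau> ?\<pi> * Mp pd \<tau> (W u))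
    + pd^2 * Mp pd \<tau> (W u)"
    by (simp add: Pf_def MM_pop) (simp add: MM_def locx_def)
  also have "\<dots> = locW pd \<tau> ?\<pi> * Mp pd \<tau> (W u)"
    by (subst loc_identity[OF pd0 pd1]) (simp add: algebra_simps)
  finally show ?thesis using W by (simp add: PP_eq_Pf MM_def)
next
  case (WX u x)
  let ?\<pi> = "out_seq u"
  show ?thesis
  proof (cases "x \<in> {SCons, SConsNil}")
    case True
    have "(\<Sum>ys\<in>com_set r. qq r pd ys * MM pd \<tau> (W ((x, ys) # u)))
        = (\<Sum>ys\<in>com_set r. qq r pd ys * (\<Prod>y\<leftarrow>ys. locW pd \<tau> (?\<pi> @ [y]))) * Mp pd \<tau> (WX u x)"
      by (subst sum_distrib_right, rule sum.cong[OF refl]) (auto simp: MM_child com_set_def)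
    hence "Pf r pd (WX u x) (MM pd \<tau>) = ((\<Sum>ys\<in>com_set r. qq r pd ys * (\<Prod>y\<leftarrow>ys. locW pd \<tau> (?\<pi> @ [y]))) + pd^r) * Mp pd \<tau> (WX u x)"
      using True by (simp add: Pf_def MM_pop algebra_simps)
    also have "\<dots> = locC pd \<tau> ?\<pi> * Mp pd \<tau> (WX u x)"
      by (simp only: child_sum[OF pd0 pd1 tau])
    finally show ?thesis using WX True by (simp add: PP_eq_Pf MM_def locx_def)
  next
    case False
    hence "x \<in> {SNil, SNilCons}" by (cases x) auto
    hence "?\<pi> \<noteq> \<tau>" using z WX by auto
    hence "locN \<tau> ?\<pi> = 1" by (simp add: locN_def)
    then show ?thesis using WX False by (simp add: PP_eq_Pf Pf_def MM_pop) (simp add: MM_def locx_def)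
  qed
next
  case Bot
  then show ?thesis using z by simp
qed

lemma root_hit_sums:
  assumes kap: "real r * (1 - pd)^2 < 1"
  shows "(\<lambda>k. Gen r pd (outA r \<tau> \<union> {Bot}) (\<lambda>z. if z = Bot \<and> z \<notin> outA r \<tau> then 1 else 0) k (W []))
           sums (1 - (1 - pd) ^ (2 * length \<tau> + 1))"
proof -
  let ?B = "outA r \<tau> \<union> {Bot}"
  define E where "E = (3 - 2 * pd) / (1 - real r * (1 - pd)^2)"
  define c where "c = 1 + E * (real r * (1 - pd))"
  have E0: "0 \<le> E" unfolding E_def using kap pd1 by auto
  have c0: "0 \<le> c" unfolding c_def using E0 pd1 by auto
  have E1: "E = 1 + (1 - pd) * (c + 1)"
  proof -
    have "E * (1 - real r * (1 - pd)^2) = 3 - 2 * pd" unfolding E_def using kap by simp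
    thus ?thesis unfolding c_def by (simp add: power2_eq_square algebra_simps)
  qed
  have U0: "(\<lambda>j. Us r pd ?B j (W [])) \<longlonglongrightarrow> 0"
    by (rule Us_tendsto[OF pd0 pd1, of "VV E c"])
       (auto intro!: VV_nonneg E0 c0 VV_drift[OF pd0 pd1 E1 c_def])
  have S: "(\<lambda>k. Gen r pd ?B (\<lambda>z. if z \<in> ?B then MM pd \<tau> z else 0) k (W [])) sums MM pd \<tau> (W [])"
  proof (rule harmonic_repr[OF pd0 pd1, where S = "{z. vst r z}"])
    show "\<And>z z'. z \<in> {z. vst r z} \<Longrightarrow> z' \<in> succ r z \<Longrightarrow> z' \<in> {z. vst r z}"
      using vst_succ by blast
    show "\<And>z. \<bar>MM pd \<tau> z\<bar> \<le> 1" using MM_bounds[OF pd0 pd1] by (simp add: abs_le_iff)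
    show "\<And>z. z \<in> {z. vst r z} \<Longrightarrow> z \<notin> ?B \<Longrightarrow> MM pd \<tau> z = PP r pd z (MM pd \<tau>)"
      using MM_harm by blast
    show "W [] \<in> {z. vst r z}" by simp
    show "(\<lambda>j. Us r pd ?B j (W [])) \<longlonglongrightarrow> 0" by (rule U0)
  qed
  have g: "(\<lambda>z. if z \<in> ?B then MM pd \<tau> z else 0) = (\<lambda>z. if z = Bot \<and> z \<notin> outA r \<tau> then 1 else 0)"
  proof (rule ext)
    fix z
    show "(if z \<in> ?B then MM pd \<tau> z else 0) = (if z = Bot \<and> z \<notin> outA r \<tau> then 1 else 0)"
      by (cases "z \<in> outA r \<tau>") (auto simp: MM_outA, simp add: MM_def)
  qed
  show ?thesis using S unfolding g MM_root .
qed

end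


theorem proposition3p11:
  fixes r :: nat and pd :: real
  assumes "r \<ge> 1" and "1 - 1 / sqrt (real r) < pd" and "pd < 1"
  shows "(\<forall>s \<tau>. subtree_root r s \<and> set \<tau> \<subseteq> {1..r} \<longrightarrow>
            hit_before_prob r pd s (outA r (root_prefix s @ \<tau>)) (pop s)
              = 1 - (1 - pd) ^ (2 * length \<tau> + 1))
       \<and> (\<forall>s \<tau>. subtree_root r s \<and> set \<tau> \<subseteq> {1..r} \<longrightarrow>
            exp_hit r pd s (outA r (root_prefix s @ \<tau>) \<union> {pop s})
              = exp_hit r pd (W []) (outA r \<tau> \<union> {Bot}))"
proof -
  have sq: "1 \<le> sqrt (real r)" using assms(1) by simp
  hence "1 / sqrt (real r) \<le> 1" by simp
  hence pdpos: "0 < pd" using assms(2) by linarith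
  have pd0: "0 \<le> pd" and pd1: "pd \<le> 1" using pdpos assms(3) by auto
  have kap: "real r * (1 - pd)^2 < 1"
  proof -
    have a: "1 - pd < 1 / sqrt (real r)" using assms(2) by linarith
    have "(1 - pd)^2 < (1 / sqrt (real r))^2"
      by (rule power_strict_mono[OF a]) (use assms(3) in auto)
    also have "\<dots> = 1 / real r" by (simp add: power_divide)
    finally have "(1 - pd)^2 < 1 / real r" .
    hence "real r * (1 - pd)^2 < real r * (1 / real r)"
      using assms(1) by (intro mult_strict_left_mono) auto
    thus ?thesis using assms(1) by simp
  qed
  have shiftGen: "Gen r pd (outA r (out_seq w @ \<tau>) \<union> {pop (W w)}) g0' k (W w)
        = Gen r pd (outA r \<tau> \<union> {Bot}) g0 k (W [])"
    if w: "w \<noteq> []" "valid_word r w"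
      and g0: "\<And>z. vst r z \<Longrightarrow> g0' (shift w z) = g0 z" for w \<tau> g0' g0 k
  proof -
    have "Gen r pd (outA r (out_seq w @ \<tau>) \<union> {pop (W w)}) g0' k (shift w (W []))
        = Gen r pd (outA r \<tau> \<union> {Bot}) g0 k (W [])"
    proof (rule Gen_shift[OF pd0 pd1])
      show "Bot \<in> outA r \<tau> \<union> {Bot}" by simp
      show "\<And>z. vst r z \<Longrightarrow> (shift w z \<in> outA r (out_seq w @ \<tau>) \<union> {pop (W w)}) = (z \<in> outA r \<tau> \<union> {Bot})"
        by (rule shift_targets[OF pd0 pd1 w])
      show "\<And>z. vst r z \<Longrightarrow> g0' (shift w z) = g0 z" by (rule g0)
      show "vst r (W [])" by simp
    qed
    thus ?thesis by simp
  qed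
  show ?thesis
  proof (intro conjI allI impI)
    fix s \<tau> assume h: "subtree_root r s \<and> set \<tau> \<subseteq> {1..r}"
    then obtain w where s: "s = W w" and w: "w \<noteq> []" "valid_word r w" by (auto simp: subtree_root_def)
    have tau: "set \<tau> \<subseteq> {1..r}" using h by blast
    have "hit_before_prob r pd s (outA r (root_prefix s @ \<tau>)) (pop s)
        = (\<Sum>k. Gen r pd (outA r (out_seq w @ \<tau>) \<union> {pop (W w)})
                 (\<lambda>z. if z = pop (W w) \<and> z \<notin> outA r (out_seq w @ \<tau>) then 1 else 0) k (W w))"
      unfolding s root_prefix_def by (simp add: hit_before_Gen_sum[OF pd0 pd1])
    also have "\<dots> = (\<Sum>k. Gen r pd (outA r \<tau> \<union> {Bot}) (\<lambda>z. if z = Bot \<and> z \<notin> outA r \<tau> then 1 else 0) k (W []))"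
      by (subst shiftGen[OF w]) (rule shift_g0[OF pd0 pd1 w], assumption, rule refl)
    also have "\<dots> = 1 - (1 - pd) ^ (2 * length \<tau> + 1)"
      by (rule sums_unique[symmetric], rule root_hit_sums[OF pd0 pd1 tau kap])
    finally show "hit_before_prob r pd s (outA r (root_prefix s @ \<tau>)) (pop s) = 1 - (1 - pd) ^ (2 * length \<tau> + 1)" .
  next
    fix s \<tau> assume h: "subtree_root r s \<and> set \<tau> \<subseteq> {1..r}"
    then obtain w where s: "s = W w" and w: "w \<noteq> []" "valid_word r w" by (auto simp: subtree_root_def)
    have "hit_time_prob r pd s (outA r (root_prefix s @ \<tau>) \<union> {pop s}) k
        = hit_time_prob r pd (W []) (outA r \<tau> \<union> {Bot}) k" for k
    proof -
      have "hit_time_prob r pd s (outA r (root_prefix s @ \<tau>) \<union> {pop s}) k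
          = Gen r pd (outA r (out_seq w @ \<tau>) \<union> {pop (W w)})
              (\<lambda>z. if z \<in> outA r (out_seq w @ \<tau>) \<union> {pop (W w)} then 1 else 0) k (W w)"
        unfolding s root_prefix_def by (simp add: hit_time_Gen[OF pd0 pd1])
      also have "\<dots> = Gen r pd (outA r \<tau> \<union> {Bot}) (\<lambda>z. if z \<in> outA r \<tau> \<union> {Bot} then 1 else 0) k (W [])"
        by (rule shiftGen[OF w]) (simp only: shift_targets[OF pd0 pd1 w])
      also have "\<dots> = hit_time_prob r pd (W []) (outA r \<tau> \<union> {Bot}) k"
        by (simp add: hit_time_Gen[OF pd0 pd1])
      finally show ?thesis .
    qed
    hence e: "hit_time_prob r pd s (outA r (root_prefix s @ \<tau>) \<union> {pop s}) = hit_time_prob r pd (W []) (outA r \<tau> \<union> {Bot})"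
      by (rule ext)
    show "exp_hit r pd s (outA r (root_prefix s @ \<tau>) \<union> {pop s}) = exp_hit r pd (W []) (outA r \<tau> \<union> {Bot})"
      unfolding exp_hit_def e ..
  qed
qed


end
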